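(* Let $\rho$ be a probability measure on rooted infinite graphs with finite expected degree. Then the tree entropy $\mathbf h(\rho)$ is finite.
   Context: Graphs are connected and locally finite, and may have multiple edges. - $p_k(x;G)$ is the probability that simple random walk on $G$ started at $x$ returns to $x$ after $k$ steps. Simple random walk moves from $x$ to $y$ with probability equal to the number of edges joining $x,y$ divided by $\deg_G(x)$. - The expected degree of $\rho$ is $\int\deg_G(x)\,d\rho(G,x)$. - The tree entropy is $\mathbf h(\rho):=\int\bigl(\log\deg_G(x)-\sum_{k\ge1}\frac1k p_k(x;G)\bigr)\,d\rho(G,x)$. *)

theory Defs
  imports "HOL-Probability.Probability"
begin

text \<open>A (labelled) graph on vertex set \<nat> is given by its edge-multiplicity
  function A: A x y = number of edges joining x and y.\<close>

definition deg :: "(nat \<Rightarrow> nat \<Rightarrow> nat) \<Rightarrow> nat \<Rightarrow> nat" where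
  "deg A x = (\<Sum>z\<in>{z. A x z \<noteq> 0}. A x z)"

definition inf_graph :: "(nat \<Rightarrow> nat \<Rightarrow> nat) \<Rightarrow> bool" where
  "inf_graph A \<longleftrightarrow>
     (\<forall>x y. A x y = A y x) \<and> (\<forall>x. A x x = 0) \<and>
     (\<forall>x. finite {y. A x y \<noteq> 0}) \<and>
     (\<forall>x y. (x, y) \<in> {(u, v). A u v \<noteq> 0}\<^sup>*)"

primrec walk_prob :: "(nat \<Rightarrow> nat \<Rightarrow> nat) \<Rightarrow> nat \<Rightarrow> nat \<Rightarrow> nat \<Rightarrow> real" where
  "walk_prob A 0 x y = (if x = y then 1 else 0)"
| "walk_prob A (Suc k) x y =
     (\<Sum>z\<in>{z. A x z \<noteq> 0}. real (A x z) / real (deg A x) * walk_prob A k z y)"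

definition ret_prob :: "(nat \<Rightarrow> nat \<Rightarrow> nat) \<Rightarrow> nat \<Rightarrow> nat \<Rightarrow> real" where
  "ret_prob A k x = walk_prob A k x x"

text \<open>Measurable space of rooted labelled graphs: (edge multiplicities, root).\<close>
definition graph_space :: "((nat \<Rightarrow> nat \<Rightarrow> nat) \<times> nat) measure" where
  "graph_space = (\<Pi>\<^sub>M x\<in>UNIV. \<Pi>\<^sub>M y\<in>UNIV. count_space UNIV) \<Otimes>\<^sub>M count_space UNIV"

definition tree_entropy_integrand :: "(nat \<Rightarrow> nat \<Rightarrow> nat) \<times> nat \<Rightarrow> real" where
  "tree_entropy_integrand G =
     ln (real (deg (fst G) (snd G))) -
     (\<Sum>k. ret_prob (fst G) (Suc k) (snd G) / real (Suc k))"

end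

theory Submission
  imports Defs
begin


definition nb :: "(nat \<Rightarrow> nat \<Rightarrow> nat) \<Rightarrow> nat \<Rightarrow> nat set" where
  "nb A y = {z. A y z \<noteq> 0}"

definition Pop :: "(nat \<Rightarrow> nat \<Rightarrow> nat) \<Rightarrow> (nat \<Rightarrow> real) \<Rightarrow> nat \<Rightarrow> real" where
  "Pop A f y = (\<Sum>z\<in>nb A y. real (A y z) * f z) / real (deg A y)"

primrec bl :: "(nat \<Rightarrow> nat \<Rightarrow> nat) \<Rightarrow> nat \<Rightarrow> nat \<Rightarrow> nat set" where
  "bl A x 0 = {x}"
| "bl A x (Suc n) = bl A x n \<union> (\<Union>y\<in>bl A x n. nb A y)"

lemma ig_sym: "inf_graph A \<Longrightarrow> A y z = A z y"
  unfolding inf_graph_def by blast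

lemma ig_loop: "inf_graph A \<Longrightarrow> A y y = 0"
  unfolding inf_graph_def by blast

lemma ig_fin: "inf_graph A \<Longrightarrow> finite (nb A y)"
  unfolding inf_graph_def nb_def by blast

lemma ig_conn: "inf_graph A \<Longrightarrow> (y, z) \<in> {(u, v). A u v \<noteq> 0}\<^sup>*"
  unfolding inf_graph_def by blast

lemma deg_nb: "deg A y = (\<Sum>z\<in>nb A y. A y z)"
  unfolding deg_def nb_def by simp

lemma real_deg_nb: "real (deg A y) = (\<Sum>z\<in>nb A y. real (A y z))"
  unfolding deg_nb by simp

lemma nb_nonempty:
  assumes G: "inf_graph A" shows "nb A y \<noteq> {}"
proof -
  obtain z :: nat where z: "z \<noteq> y" by (metis n_not_Suc_n)
  have "(y, z) \<in> {(u, v). A u v \<noteq> 0}\<^sup>*" by (rule ig_conn[OF G])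
  then show ?thesis
  proof (cases rule: converse_rtranclE)
    case base then show ?thesis using z by simp
  next
    case (step w) then show ?thesis unfolding nb_def by auto
  qed
qed

lemma deg_pos:
  assumes G: "inf_graph A" shows "deg A y > 0"
proof -
  obtain z where z: "z \<in> nb A y" using nb_nonempty[OF G] by blast
  have "A y z \<le> deg A y" unfolding deg_nb
    by (rule member_le_sum) (use z ig_fin[OF G] in auto)
  moreover have "A y z > 0" using z unfolding nb_def by simp
  ultimately show ?thesis by simp
qed

lemma real_deg_pos: "inf_graph A \<Longrightarrow> real (deg A y) > 0"
  using deg_pos by simp

lemma bl_fin: "inf_graph A \<Longrightarrow> finite (bl A x n)"
  by (induction n) (auto simp: ig_fin)

lemma bl_root: "x \<in> bl A x n"
  by (induction n) auto

lemma bl_mono: "n \<le> m \<Longrightarrow> bl A x n \<subseteq> bl A x m"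
proof (induction m)
  case 0 then show ?case by simp
next
  case (Suc m) then show ?case by (cases "n = Suc m") auto
qed

lemma bl_nb: "y \<in> bl A x n \<Longrightarrow> nb A y \<subseteq> bl A x (Suc n)"
  by auto

lemma bl_nb': "y \<in> bl A x n \<Longrightarrow> n < R \<Longrightarrow> nb A y \<subseteq> bl A x R"
  using bl_nb[of y A x n] bl_mono[of "Suc n" R A x] by auto

lemma walk_Suc: "walk_prob A (Suc k) y x = Pop A (\<lambda>z. walk_prob A k z x) y"
  unfolding Pop_def nb_def by (simp add: sum_divide_distrib)

lemma walk_nonneg: "walk_prob A k y x \<ge> 0"
proof (induction k arbitrary: y)
  case 0 then show ?case by simp
next
  case (Suc k) then show ?case by (simp add: sum_nonneg)
qed

definition sb :: "(nat \<Rightarrow> nat \<Rightarrow> nat) \<Rightarrow> nat \<Rightarrow> (nat \<Rightarrow> real) \<Rightarrow> nat \<Rightarrow> bool" where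
  "sb A x f n \<longleftrightarrow> (\<forall>z. f z \<noteq> 0 \<longrightarrow> z \<in> bl A x n)"

lemma sb_mono: "sb A x f n \<Longrightarrow> n \<le> m \<Longrightarrow> sb A x f m"
  unfolding sb_def using bl_mono by blast

lemma Pop_sb:
  assumes G: "inf_graph A" and f: "sb A x f n" shows "sb A x (Pop A f) (Suc n)"
  unfolding sb_def
proof (intro allI impI)
  fix y assume "Pop A f y \<noteq> 0"
  then have "(\<Sum>z\<in>nb A y. real (A y z) * f z) \<noteq> 0" unfolding Pop_def by auto
  then obtain z where z: "z \<in> nb A y" "f z \<noteq> 0" using sum.neutral[of "nb A y" "\<lambda>z. real (A y z) * f z"] by auto
  then have "z \<in> bl A x n" using f unfolding sb_def by blast
  moreover have "y \<in> nb A z" using z ig_sym[OF G] unfolding nb_def by auto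
  ultimately show "y \<in> bl A x (Suc n)" by auto
qed

lemma walk_sb:
  assumes G: "inf_graph A" shows "sb A x (\<lambda>y. walk_prob A k y x) k"
proof (induction k)
  case 0 then show ?case unfolding sb_def by simp
next
  case (Suc k)
  show ?case unfolding walk_Suc by (rule Pop_sb[OF G Suc])
qed

lemma sumA:
  assumes G: "inf_graph A" and y: "y \<in> bl A x n" and nR: "n < R"
  shows "(\<Sum>z\<in>bl A x R. real (A y z)) = real (deg A y)"
proof -
  have sub: "nb A y \<subseteq> bl A x R" by (rule bl_nb'[OF y nR])
  have "(\<Sum>z\<in>bl A x R. real (A y z)) = (\<Sum>z\<in>nb A y. real (A y z))"
    by (rule sum.mono_neutral_right) (use sub bl_fin[OF G] in \<open>auto simp: nb_def\<close>)
  then show ?thesis by (simp add: real_deg_nb)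
qed

lemma PopV:
  assumes G: "inf_graph A" and f: "sb A x f R"
  shows "real (deg A y) * Pop A f y = (\<Sum>z\<in>bl A x R. real (A y z) * f z)"
proof -
  have "real (deg A y) * Pop A f y = (\<Sum>z\<in>nb A y. real (A y z) * f z)"
    unfolding Pop_def using real_deg_pos[OF G, of y] by simp
  also have "\<dots> = (\<Sum>z\<in>nb A y \<inter> bl A x R. real (A y z) * f z)"
    by (rule sum.mono_neutral_right) (use f ig_fin[OF G] in \<open>auto simp: sb_def\<close>)
  also have "\<dots> = (\<Sum>z\<in>bl A x R. real (A y z) * f z)"
    by (rule sum.mono_neutral_left) (use bl_fin[OF G] in \<open>auto simp: nb_def\<close>)
  finally show ?thesis .
qed



definition ip :: "(nat \<Rightarrow> nat \<Rightarrow> nat) \<Rightarrow> nat \<Rightarrow> nat \<Rightarrow> (nat \<Rightarrow> real) \<Rightarrow> (nat \<Rightarrow> real) \<Rightarrow> real" where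
  "ip A x R f g = (\<Sum>y\<in>bl A x R. real (deg A y) * f y * g y)"

lemma ip_mono:
  assumes G: "inf_graph A" and f: "sb A x f n" and "n \<le> R" "R \<le> R'"
  shows "ip A x R' f g = ip A x R f g"
  unfolding ip_def
proof (rule sum.mono_neutral_left[symmetric])
  show "finite (bl A x R')" by (rule bl_fin[OF G])
  show "bl A x R \<subseteq> bl A x R'" by (rule bl_mono) fact
  show "\<forall>i\<in>bl A x R' - bl A x R. real (deg A i) * f i * g i = 0"
    using f bl_mono[OF \<open>n \<le> R\<close>, of A x] unfolding sb_def by auto
qed

lemma ip_sym:
  assumes G: "inf_graph A" and f: "sb A x f R" and g: "sb A x g R"
  shows "ip A x R (Pop A f) g = ip A x R f (Pop A g)"
proof -
  let ?V = "bl A x R"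
  have "ip A x R (Pop A f) g = (\<Sum>y\<in>?V. (real (deg A y) * Pop A f y) * g y)"
    unfolding ip_def by (simp add: mult.assoc)
  also have "\<dots> = (\<Sum>y\<in>?V. (\<Sum>z\<in>?V. real (A y z) * f z) * g y)"
    using PopV[OF G f] by simp
  also have "\<dots> = (\<Sum>y\<in>?V. \<Sum>z\<in>?V. real (A y z) * f z * g y)"
    by (simp add: sum_distrib_right)
  also have "\<dots> = (\<Sum>z\<in>?V. \<Sum>y\<in>?V. real (A y z) * f z * g y)"
    by (rule sum.swap)
  also have "\<dots> = (\<Sum>z\<in>?V. \<Sum>y\<in>?V. f z * (real (A z y) * g y))"
  proof (intro sum.cong refl)
    fix z y show "real (A y z) * f z * g y = f z * (real (A z y) * g y)"
      using ig_sym[OF G, of y z] by simp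
  qed
  also have "\<dots> = (\<Sum>z\<in>?V. f z * (\<Sum>y\<in>?V. real (A z y) * g y))"
    by (simp add: sum_distrib_left)
  also have "\<dots> = (\<Sum>z\<in>?V. f z * (real (deg A z) * Pop A g z))"
    using PopV[OF G g] by simp
  also have "\<dots> = ip A x R f (Pop A g)"
    unfolding ip_def by (simp add: mult_ac)
  finally show ?thesis .
qed

lemma walk_Suc_fun: "(\<lambda>y. walk_prob A (Suc k) y x) = Pop A (\<lambda>z. walk_prob A k z x)"
  by (rule ext) (rule walk_Suc)

lemma sum_delta_deg:
  assumes G: "inf_graph A"
  shows "(\<Sum>y\<in>bl A x R. real (deg A y) * (if y = x then 1 else 0) * h y) = real (deg A x) * h x"
proof -
  have "(\<Sum>y\<in>bl A x R. real (deg A y) * (if y = x then 1 else 0) * h y)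
      = (\<Sum>y\<in>bl A x R. if y = x then real (deg A y) * h y else 0)"
    by (rule sum.cong) auto
  also have "\<dots> = real (deg A x) * h x"
    using bl_root[of x A R] bl_fin[OF G] by (simp add: sum.delta')
  finally show ?thesis .
qed

lemma L1:
  assumes G: "inf_graph A"
  shows "t \<le> R \<Longrightarrow> (\<Sum>y\<in>bl A x R. real (deg A y) * walk_prob A t y x) = real (deg A x)"
proof (induction t arbitrary: R)
  case 0
  show ?case using sum_delta_deg[OF G, where h="\<lambda>_. 1"] by simp
next
  case (Suc t)
  let ?V = "bl A x R"
  let ?q = "\<lambda>z. walk_prob A t z x"
  have sq: "sb A x ?q R" using sb_mono[OF walk_sb[OF G, of x t]] Suc.prems by simp
  have "(\<Sum>y\<in>?V. real (deg A y) * walk_prob A (Suc t) y x) = (\<Sum>y\<in>?V. real (deg A y) * Pop A ?q y)"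
    by (simp only: walk_Suc)
  also have "\<dots> = (\<Sum>y\<in>?V. \<Sum>z\<in>?V. real (A y z) * ?q z)"
    using PopV[OF G sq] by simp
  also have "\<dots> = (\<Sum>z\<in>?V. \<Sum>y\<in>?V. real (A y z) * ?q z)"
    by (rule sum.swap)
  also have "\<dots> = (\<Sum>z\<in>?V. \<Sum>y\<in>?V. ?q z * real (A z y))"
  proof (intro sum.cong refl)
    fix z y show "real (A y z) * ?q z = ?q z * real (A z y)"
      using ig_sym[OF G, of y z] by simp
  qed
  also have "\<dots> = (\<Sum>z\<in>?V. ?q z * (\<Sum>y\<in>?V. real (A z y)))"
    by (simp add: sum_distrib_left)
  also have "\<dots> = (\<Sum>z\<in>?V. real (deg A z) * ?q z)"
  proof (rule sum.cong)
    fix z assume "z \<in> ?V"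
    show "?q z * (\<Sum>y\<in>?V. real (A z y)) = real (deg A z) * ?q z"
    proof (cases "?q z = 0")
      case False
      then have "z \<in> bl A x t" using walk_sb[OF G, of x t] unfolding sb_def by blast
      then show ?thesis using sumA[OF G _ ] Suc.prems by simp
    qed simp
  qed simp
  also have "\<dots> = real (deg A x)" using Suc.IH Suc.prems by simp
  finally show ?case .
qed

lemma R1:
  assumes G: "inf_graph A"
  shows "a + b \<le> R \<Longrightarrow> ip A x R (\<lambda>y. walk_prob A a y x) (\<lambda>y. walk_prob A b y x)
           = real (deg A x) * walk_prob A (a + b) x x"
proof (induction a arbitrary: b)
  case 0
  show ?case unfolding ip_def using sum_delta_deg[OF G, where h="\<lambda>y. walk_prob A b y x"] by simp
next
  case (Suc a)
  have sa: "sb A x (\<lambda>y. walk_prob A a y x) R" using sb_mono[OF walk_sb[OF G, of x a]] Suc.prems by simp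
  have sbb: "sb A x (\<lambda>y. walk_prob A b y x) R" using sb_mono[OF walk_sb[OF G, of x b]] Suc.prems by simp
  have "ip A x R (\<lambda>y. walk_prob A (Suc a) y x) (\<lambda>y. walk_prob A b y x)
      = ip A x R (\<lambda>y. walk_prob A a y x) (\<lambda>y. walk_prob A (Suc b) y x)"
    unfolding walk_Suc_fun by (rule ip_sym[OF G sa sbb])
  also have "\<dots> = real (deg A x) * walk_prob A (a + Suc b) x x"
    using Suc.IH[of "Suc b"] Suc.prems by simp
  finally show ?case by simp
qed

lemma DS1:
  assumes G: "inf_graph A" and p: "sb A x p n" and nR: "n < R"
  shows "(\<Sum>w\<in>bl A x R. \<Sum>y\<in>bl A x R. real (A w y) * p y) = (\<Sum>y\<in>bl A x R. real (deg A y) * p y)"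
proof -
  let ?V = "bl A x R"
  have "(\<Sum>w\<in>?V. \<Sum>y\<in>?V. real (A w y) * p y) = (\<Sum>y\<in>?V. \<Sum>w\<in>?V. real (A w y) * p y)"
    by (rule sum.swap)
  also have "\<dots> = (\<Sum>y\<in>?V. \<Sum>w\<in>?V. p y * real (A y w))"
  proof (intro sum.cong refl)
    fix y w show "real (A w y) * p y = p y * real (A y w)"
      using ig_sym[OF G, of y w] by simp
  qed
  also have "\<dots> = (\<Sum>y\<in>?V. p y * (\<Sum>w\<in>?V. real (A y w)))"
    by (simp add: sum_distrib_left)
  also have "\<dots> = (\<Sum>y\<in>?V. real (deg A y) * p y)"
  proof (rule sum.cong)
    fix y assume "y \<in> ?V"
    show "p y * (\<Sum>w\<in>?V. real (A y w)) = real (deg A y) * p y"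
    proof (cases "p y = 0")
      case False
      then have "y \<in> bl A x n" using p unfolding sb_def by blast
      then show ?thesis using sumA[OF G _ nR] by simp
    qed simp
  qed simp
  finally show ?thesis .
qed

lemma DS2:
  assumes G: "inf_graph A" and p: "sb A x p n" and nR: "n < R"
  shows "(\<Sum>w\<in>bl A x R. \<Sum>y\<in>bl A x R. real (A w y) * p w) = (\<Sum>w\<in>bl A x R. real (deg A w) * p w)"
proof (rule sum.cong)
  fix w assume "w \<in> bl A x R"
  show "(\<Sum>y\<in>bl A x R. real (A w y) * p w) = real (deg A w) * p w"
  proof (cases "p w = 0")
    case False
    then have "w \<in> bl A x n" using p unfolding sb_def by blast
    then show ?thesis using sumA[OF G _ nR] by (simp add: sum_distrib_right[symmetric])
  qed simp
qed simp

lemma DS3: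
  assumes G: "inf_graph A" and f: "sb A x f R"
  shows "(\<Sum>w\<in>bl A x R. \<Sum>y\<in>bl A x R. real (A w y) * f y * p w) = (\<Sum>w\<in>bl A x R. real (deg A w) * Pop A f w * p w)"
proof (rule sum.cong)
  fix w assume "w \<in> bl A x R"
  show "(\<Sum>y\<in>bl A x R. real (A w y) * f y * p w) = real (deg A w) * Pop A f w * p w"
    using PopV[OF G f, of w] by (simp add: sum_distrib_right[symmetric])
qed simp

lemma sb_sq: "sb A x f n \<Longrightarrow> sb A x (\<lambda>y. (f y)\<^sup>2) n"
  unfolding sb_def by simp

lemma variance:
  assumes G: "inf_graph A" and f: "sb A x f n" and nR: "n + 2 \<le> R"
  shows "(\<Sum>w\<in>bl A x R. \<Sum>y\<in>bl A x R. real (A w y) * (f y - Pop A f w)\<^sup>2)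
         = ip A x R f f - ip A x R (Pop A f) (Pop A f)"
proof -
  let ?V = "bl A x R"
  let ?m = "Pop A f"
  have fR: "sb A x f R" using sb_mono[OF f] nR by simp
  have m1: "sb A x ?m (Suc n)" by (rule Pop_sb[OF G f])
  have "(\<Sum>w\<in>?V. \<Sum>y\<in>?V. real (A w y) * (f y - ?m w)\<^sup>2)
      = (\<Sum>w\<in>?V. \<Sum>y\<in>?V. real (A w y) * (f y)\<^sup>2 - 2 * (real (A w y) * f y * ?m w) + real (A w y) * (?m w)\<^sup>2)"
    by (intro sum.cong refl) (simp add: power2_diff algebra_simps)
  also have "\<dots> = (\<Sum>w\<in>?V. \<Sum>y\<in>?V. real (A w y) * (f y)\<^sup>2)
       - 2 * (\<Sum>w\<in>?V. \<Sum>y\<in>?V. real (A w y) * f y * ?m w)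
       + (\<Sum>w\<in>?V. \<Sum>y\<in>?V. real (A w y) * (?m w)\<^sup>2)"
    by (simp add: sum.distrib sum_subtractf sum_distrib_left)
  also have "(\<Sum>w\<in>?V. \<Sum>y\<in>?V. real (A w y) * (f y)\<^sup>2) = ip A x R f f"
    using DS1[OF G sb_sq[OF f]] nR unfolding ip_def by (simp add: power2_eq_square mult_ac)
  also have "(\<Sum>w\<in>?V. \<Sum>y\<in>?V. real (A w y) * f y * ?m w) = ip A x R ?m ?m"
    using DS3[OF G fR, of ?m] unfolding ip_def by simp
  also have "(\<Sum>w\<in>?V. \<Sum>y\<in>?V. real (A w y) * (?m w)\<^sup>2) = ip A x R ?m ?m"
    using DS2[OF G sb_sq[OF m1]] nR unfolding ip_def by (simp add: power2_eq_square mult_ac)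
  finally show ?thesis by simp
qed



lemma iso:
  assumes G: "inf_graph A" and S: "finite S" and T: "finite T" and y0: "y0 \<in> S"
  shows "\<exists>w y. A w y \<noteq> 0 \<and> (y \<in> S) \<noteq> (w \<in> T)"
proof (rule ccontr)
  assume "\<not> ?thesis"
  then have H: "\<And>w y. A w y \<noteq> 0 \<Longrightarrow> (y \<in> S) = (w \<in> T)" by blast
  have all: "v \<in> S \<union> T" for v
  proof -
    have "(y0, v) \<in> {(u, v). A u v \<noteq> 0}\<^sup>*" by (rule ig_conn[OF G])
    then show ?thesis
    proof (induction rule: rtrancl_induct)
      case base then show ?case using y0 by simp
    next
      case (step a b)
      then have ab: "A a b \<noteq> 0" by simp
      then have ba: "A b a \<noteq> 0" using ig_sym[OF G, of a b] by simp
      show ?case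
      proof (cases "a \<in> S")
        case True then show ?thesis using H[OF ba] by simp
      next
        case False then have "a \<in> T" using step.IH by simp
        then show ?thesis using H[OF ab] by simp
      qed
    qed
  qed
  then have "UNIV \<subseteq> S \<union> T" by blast
  then have "finite (UNIV :: nat set)" using S T finite_subset by blast
  then show False by simp
qed

definition Phi :: "(nat \<Rightarrow> nat \<Rightarrow> nat) \<Rightarrow> nat set \<Rightarrow> (nat \<Rightarrow> real) \<Rightarrow> (nat \<Rightarrow> real) \<Rightarrow> real" where
  "Phi A V g h = (\<Sum>w\<in>V. \<Sum>y\<in>V. real (A w y) * \<bar>g y - h w\<bar>)"

lemma Phi_nonneg: "Phi A V g h \<ge> 0"
  unfolding Phi_def by (intro sum_nonneg) simp

lemma abs_split:
  fixes a b m :: real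
  assumes "0 < m" "a = 0 \<or> m \<le> a" "b = 0 \<or> m \<le> b"
  shows "\<bar>a - b\<bar> = \<bar>max (a - m) 0 - max (b - m) 0\<bar>
           + m * \<bar>(if a \<noteq> 0 then 1 else 0) - (if b \<noteq> 0 then 1 else 0)\<bar>"
  using assms by (cases "a = 0"; cases "b = 0") (auto simp: max_def)

lemma coarea_aux:
  assumes G: "inf_graph A" and V: "finite V" and F: "finite F" and FV: "F \<subseteq> V"
    and nbV: "\<forall>y\<in>F. nb A y \<subseteq> V"
  shows "card {y\<in>F. g y \<noteq> 0} + card {w\<in>F. h w \<noteq> 0} = N \<Longrightarrow> (\<forall>y. g y \<ge> 0) \<Longrightarrow> (\<forall>w. h w \<ge> 0)
     \<Longrightarrow> (\<forall>y. g y \<noteq> 0 \<longrightarrow> y \<in> F) \<Longrightarrow> (\<forall>w. h w \<noteq> 0 \<longrightarrow> w \<in> F) \<Longrightarrow> g v0 \<le> Phi A V g h"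
proof (induction N arbitrary: g h rule: less_induct)
  case (less N)
  note g0 = less.prems(2) and h0 = less.prems(3) and gF = less.prems(4) and hF = less.prems(5)
  show ?case
  proof (cases "g v0 > 0")
    case False then show ?thesis using Phi_nonneg[of A V g h] by simp
  next
    case True
    define Sg where "Sg = {y\<in>F. g y \<noteq> 0}"
    define Sh where "Sh = {w\<in>F. h w \<noteq> 0}"
    define Pos where "Pos = g ` Sg \<union> h ` Sh"
    have v0F: "v0 \<in> F" using gF True by auto
    have v0S: "v0 \<in> Sg" using v0F True unfolding Sg_def by simp
    have finS: "finite Sg" "finite Sh" using F unfolding Sg_def Sh_def by auto
    have finP: "finite Pos" using finS unfolding Pos_def by simp
    have neP: "Pos \<noteq> {}" using v0S unfolding Pos_def by blast
    define m where "m = Min Pos"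
    have mP: "m \<in> Pos" unfolding m_def using finP neP by (rule Min_in)
    have Ppos: "\<forall>p\<in>Pos. p > 0"
      unfolding Pos_def Sg_def Sh_def using g0 h0 by (auto simp: order_le_less)
    have m0: "m > 0" using mP Ppos by blast
    have mle: "\<And>p. p \<in> Pos \<Longrightarrow> m \<le> p" unfolding m_def using finP by simp
    have gm: "g y = 0 \<or> m \<le> g y" for y
    proof (cases "g y = 0")
      case False then have "y \<in> Sg" using gF unfolding Sg_def by auto
      then show ?thesis using mle unfolding Pos_def by blast
    qed simp
    have hm: "h w = 0 \<or> m \<le> h w" for w
    proof (cases "h w = 0")
      case False then have "w \<in> Sh" using hF unfolding Sh_def by auto
      then show ?thesis using mle unfolding Pos_def by blast
    qed simp
    define g' where "g' y = max (g y - m) 0" for y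
    define h' where "h' w = max (h w - m) 0" for w
    have sub1: "{y\<in>F. g' y \<noteq> 0} \<subseteq> Sg" unfolding Sg_def g'_def using m0 by (auto simp: max_def)
    have sub2: "{w\<in>F. h' w \<noteq> 0} \<subseteq> Sh" unfolding Sh_def h'_def using m0 by (auto simp: max_def)
    have lessN: "card {y\<in>F. g' y \<noteq> 0} + card {w\<in>F. h' w \<noteq> 0} < N"
    proof -
      have c1: "card {y\<in>F. g' y \<noteq> 0} \<le> card Sg" by (rule card_mono[OF finS(1) sub1])
      have c2: "card {w\<in>F. h' w \<noteq> 0} \<le> card Sh" by (rule card_mono[OF finS(2) sub2])
      have N: "N = card Sg + card Sh" using less.prems(1) unfolding Sg_def Sh_def by simp
      from mP consider (a) y where "y \<in> Sg" "g y = m" | (b) w where "w \<in> Sh" "h w = m"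
        unfolding Pos_def by blast
      then show ?thesis
      proof cases
        case a
        then have "y \<notin> {y\<in>F. g' y \<noteq> 0}" unfolding g'_def by simp
        then have "{y\<in>F. g' y \<noteq> 0} \<subset> Sg" using sub1 a(1) by blast
        then have "card {y\<in>F. g' y \<noteq> 0} < card Sg" by (rule psubset_card_mono[OF finS(1)])
        then show ?thesis using c2 N by simp
      next
        case b
        then have "w \<notin> {w\<in>F. h' w \<noteq> 0}" unfolding h'_def by simp
        then have "{w\<in>F. h' w \<noteq> 0} \<subset> Sh" using sub2 b(1) by blast
        then have "card {w\<in>F. h' w \<noteq> 0} < card Sh" by (rule psubset_card_mono[OF finS(2)])
        then show ?thesis using c1 N by simp
      qed
    qed
    have IH: "g' v0 \<le> Phi A V g' h'"
    proof (rule less.IH[OF lessN refl])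
      show "\<forall>y. 0 \<le> g' y" unfolding g'_def by simp
      show "\<forall>w. 0 \<le> h' w" unfolding h'_def by simp
      show "\<forall>y. g' y \<noteq> 0 \<longrightarrow> y \<in> F" using gF m0 unfolding g'_def by (auto simp: max_def)
      show "\<forall>w. h' w \<noteq> 0 \<longrightarrow> w \<in> F" using hF m0 unfolding h'_def by (auto simp: max_def)
    qed
    define Cut where "Cut = (\<Sum>w\<in>V. \<Sum>y\<in>V. real (A w y) *
        \<bar>(if g y \<noteq> 0 then 1 else 0) - (if h w \<noteq> 0 then 1 else 0)\<bar>)"
    have split: "Phi A V g h = Phi A V g' h' + m * Cut"
      unfolding Phi_def Cut_def sum_distrib_left sum.distrib[symmetric]
    proof (intro sum.cong refl)
      fix w y
      show "real (A w y) * \<bar>g y - h w\<bar> = real (A w y) * \<bar>g' y - h' w\<bar> +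
          m * (real (A w y) * \<bar>(if g y \<noteq> 0 then 1 else 0) - (if h w \<noteq> 0 then 1 else 0)\<bar>)"
        using abs_split[OF m0 gm[of y] hm[of w]] unfolding g'_def h'_def by (simp add: algebra_simps)
    qed
    have Cut1: "Cut \<ge> 1"
    proof -
      have finSg: "finite {y. g y \<noteq> 0}" using gF F by (metis (mono_tags) finite_subset mem_Collect_eq subsetI)
      have finSh: "finite {w. h w \<noteq> 0}" using hF F by (metis (mono_tags) finite_subset mem_Collect_eq subsetI)
      obtain w y where wy: "A w y \<noteq> 0" "(y \<in> {y. g y \<noteq> 0}) \<noteq> (w \<in> {w. h w \<noteq> 0})"
        using iso[OF G finSg finSh, of v0] True by auto
      have wyV: "w \<in> V \<and> y \<in> V"
      proof (cases "g y \<noteq> 0")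
        case True
        then have "y \<in> F" using gF by blast
        moreover have "w \<in> nb A y" using wy(1) ig_sym[OF G, of w y] unfolding nb_def by simp
        ultimately show ?thesis using nbV FV by blast
      next
        case False
        then have "h w \<noteq> 0" using wy(2) by simp
        then have "w \<in> F" using hF by blast
        moreover have "y \<in> nb A w" using wy(1) unfolding nb_def by simp
        ultimately show ?thesis using nbV FV by blast
      qed
      let ?t = "\<lambda>w y. real (A w y) * \<bar>(if g y \<noteq> 0 then 1 else 0) - (if h w \<noteq> 0 then 1 else 0)\<bar>"
      have "?t w y = real (A w y)" using wy(2) by auto
      also have "\<dots> \<ge> 1" using wy(1) by simp
      finally have "1 \<le> ?t w y" .
      also have "?t w y \<le> (\<Sum>y\<in>V. ?t w y)"
        by (rule member_le_sum) (use wyV V in auto)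
      also have "\<dots> \<le> (\<Sum>w\<in>V. \<Sum>y\<in>V. ?t w y)"
        by (rule member_le_sum[where f = "\<lambda>w. \<Sum>y\<in>V. ?t w y"]) (use wyV V in \<open>auto intro: sum_nonneg\<close>)
      finally show ?thesis unfolding Cut_def .
    qed
    have "g v0 = g' v0 + m" using gm[of v0] True unfolding g'_def by auto
    also have "\<dots> \<le> Phi A V g' h' + m * Cut" proof -
      have "m * 1 \<le> m * Cut" by (rule mult_left_mono[OF Cut1]) (use m0 in simp)
      then show ?thesis using IH by simp
    qed
    finally show ?thesis using split by simp
  qed
qed

lemma coarea:
  assumes G: "inf_graph A" and V: "finite V" and F: "finite F" and FV: "F \<subseteq> V"
    and nbV: "\<forall>y\<in>F. nb A y \<subseteq> V"
    and "\<forall>y. g y \<ge> 0" "\<forall>w. h w \<ge> 0" "\<forall>y. g y \<noteq> 0 \<longrightarrow> y \<in> F" "\<forall>w. h w \<noteq> 0 \<longrightarrow> w \<in> F"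
  shows "g v0 \<le> Phi A V g h"
  by (rule coarea_aux[OF G V F FV nbV refl]) (use assms in auto)



lemma Pop_nonneg: "(\<forall>z. f z \<ge> 0) \<Longrightarrow> Pop A f y \<ge> 0"
  unfolding Pop_def by (intro divide_nonneg_nonneg sum_nonneg) auto

lemma double_CS:
  fixes a b :: "nat \<Rightarrow> nat \<Rightarrow> real"
  shows "(\<Sum>w\<in>V. \<Sum>y\<in>V. a w y * b w y)\<^sup>2 \<le> (\<Sum>w\<in>V. \<Sum>y\<in>V. (a w y)\<^sup>2) * (\<Sum>w\<in>V. \<Sum>y\<in>V. (b w y)\<^sup>2)"
proof -
  have e: "\<And>c. (\<Sum>w\<in>V. \<Sum>y\<in>V. c w y) = (\<Sum>p\<in>V \<times> V. c (fst p) (snd p))"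
    by (simp add: sum.cartesian_product split_beta)
  show ?thesis unfolding e by (rule Cauchy_Schwarz_ineq_sum)
qed

lemma nash:
  assumes G: "inf_graph A" and f: "sb A x f n" and nR: "n + 2 \<le> R" and f0: "\<forall>y. f y \<ge> 0"
  shows "(ip A x R f f)^3 \<le> 4 * (\<Sum>y\<in>bl A x R. real (deg A y) * f y)^4
            * (ip A x R f f - ip A x R (Pop A f) (Pop A f))"
proof -
  let ?V = "bl A x R"
  let ?m = "Pop A f"
  define L where "L = (\<Sum>y\<in>?V. real (deg A y) * f y)"
  define u where "u = ip A x R f f"
  define u' where "u' = ip A x R ?m ?m"
  define E where "E = (\<Sum>w\<in>?V. \<Sum>y\<in>?V. real (A w y) * (f y - ?m w)\<^sup>2)"
  define S2 where "S2 = (\<Sum>w\<in>?V. \<Sum>y\<in>?V. real (A w y) * (f y + ?m w)\<^sup>2)"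
  have finV: "finite ?V" by (rule bl_fin[OF G])
  have m0: "\<forall>w. ?m w \<ge> 0" using Pop_nonneg f0 by blast
  have EE: "E = u - u'" unfolding E_def u_def u'_def by (rule variance[OF G f nR])
  have E0: "E \<ge> 0" unfolding E_def by (intro sum_nonneg) simp
  have u0: "u \<ge> 0" unfolding u_def ip_def using f0 by (intro sum_nonneg) simp
  have u'0: "u' \<ge> 0" unfolding u'_def ip_def using m0 by (intro sum_nonneg) simp
  obtain v0 where v0: "v0 \<in> ?V" "\<forall>y\<in>?V. f y \<le> f v0"
  proof -
    have ne: "f ` ?V \<noteq> {}" using bl_root[of x A R] by blast
    have "Max (f ` ?V) \<in> f ` ?V" using finV ne by simp
    then obtain v where "v \<in> ?V" "f v = Max (f ` ?V)" by (metis imageE)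
    moreover have "\<forall>y\<in>?V. f y \<le> Max (f ` ?V)" using finV by simp
    ultimately show ?thesis using that by metis
  qed
  have a: "u \<le> L * f v0"
  proof -
    have "u = (\<Sum>y\<in>?V. real (deg A y) * f y * f y)" unfolding u_def ip_def by simp
    also have "\<dots> \<le> (\<Sum>y\<in>?V. real (deg A y) * f y * f v0)"
      by (intro sum_mono mult_left_mono) (use v0 f0 in auto)
    also have "\<dots> = L * f v0" unfolding L_def by (simp add: sum_distrib_right)
    finally show ?thesis .
  qed
  have b: "(f v0)\<^sup>2 \<le> Phi A ?V (\<lambda>y. (f y)\<^sup>2) (\<lambda>w. (?m w)\<^sup>2)"
  proof (rule coarea[OF G finV bl_fin[OF G, of x "Suc n"]])
    show "bl A x (Suc n) \<subseteq> ?V" by (rule bl_mono) (use nR in simp)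
    show "\<forall>y\<in>bl A x (Suc n). nb A y \<subseteq> ?V" using bl_nb'[of _ A x "Suc n" R] nR by auto
    show "\<forall>y. 0 \<le> (f y)\<^sup>2" by simp
    show "\<forall>w. 0 \<le> (?m w)\<^sup>2" by simp
    show "\<forall>y. (f y)\<^sup>2 \<noteq> 0 \<longrightarrow> y \<in> bl A x (Suc n)"
      using f bl_mono[of n "Suc n" A x] unfolding sb_def by auto
    show "\<forall>w. (?m w)\<^sup>2 \<noteq> 0 \<longrightarrow> w \<in> bl A x (Suc n)"
      using Pop_sb[OF G f] unfolding sb_def by auto
  qed
  have c: "(Phi A ?V (\<lambda>y. (f y)\<^sup>2) (\<lambda>w. (?m w)\<^sup>2))\<^sup>2 \<le> E * S2"
  proof -
    have eqP: "Phi A ?V (\<lambda>y. (f y)\<^sup>2) (\<lambda>w. (?m w)\<^sup>2) =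
        (\<Sum>w\<in>?V. \<Sum>y\<in>?V. (sqrt (real (A w y)) * \<bar>f y - ?m w\<bar>) * (sqrt (real (A w y)) * (f y + ?m w)))"
      unfolding Phi_def
    proof (intro sum.cong refl)
      fix w y
      have h1: "\<bar>(f y)\<^sup>2 - (?m w)\<^sup>2\<bar> = \<bar>f y - ?m w\<bar> * (f y + ?m w)"
        using f0 m0 by (simp add: power2_eq_square abs_mult square_diff_square_factored)
      have h2: "sqrt (real (A w y)) * sqrt (real (A w y)) = real (A w y)" by simp
      have "sqrt (real (A w y)) * \<bar>f y - ?m w\<bar> * (sqrt (real (A w y)) * (f y + ?m w))
          = (sqrt (real (A w y)) * sqrt (real (A w y))) * (\<bar>f y - ?m w\<bar> * (f y + ?m w))"
        by (simp only: mult_ac)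
      also have "\<dots> = real (A w y) * \<bar>(f y)\<^sup>2 - (?m w)\<^sup>2\<bar>" by (simp only: h1 h2)
      finally show "real (A w y) * \<bar>(f y)\<^sup>2 - (?m w)\<^sup>2\<bar> =
          sqrt (real (A w y)) * \<bar>f y - ?m w\<bar> * (sqrt (real (A w y)) * (f y + ?m w))" by simp
    qed
    have "(Phi A ?V (\<lambda>y. (f y)\<^sup>2) (\<lambda>w. (?m w)\<^sup>2))\<^sup>2 =
        (\<Sum>w\<in>?V. \<Sum>y\<in>?V. (sqrt (real (A w y)) * \<bar>f y - ?m w\<bar>) * (sqrt (real (A w y)) * (f y + ?m w)))\<^sup>2"
      by (simp only: eqP)
    also have "\<dots> \<le> (\<Sum>w\<in>?V. \<Sum>y\<in>?V. (sqrt (real (A w y)) * \<bar>f y - ?m w\<bar>)\<^sup>2) *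
        (\<Sum>w\<in>?V. \<Sum>y\<in>?V. (sqrt (real (A w y)) * (f y + ?m w))\<^sup>2)"
      by (rule double_CS)
    also have "\<dots> = E * S2" unfolding E_def S2_def by (simp add: power_mult_distrib)
    finally show ?thesis .
  qed
  have d: "S2 \<le> 4 * u"
  proof -
    have "S2 \<le> (\<Sum>w\<in>?V. \<Sum>y\<in>?V. 2 * (real (A w y) * (f y)\<^sup>2) + 2 * (real (A w y) * (?m w)\<^sup>2))"
      unfolding S2_def
    proof (intro sum_mono)
      fix w y
      have that_: "(f y + ?m w)\<^sup>2 \<le> 2 * (f y)\<^sup>2 + 2 * (?m w)\<^sup>2"
        using zero_le_power2[of "f y - ?m w"] unfolding power2_eq_square by (simp add: algebra_simps)
      then show "real (A w y) * (f y + ?m w)\<^sup>2 \<le> 2 * (real (A w y) * (f y)\<^sup>2) + 2 * (real (A w y) * (?m w)\<^sup>2)"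
      proof -
        have "real (A w y) * (f y + ?m w)\<^sup>2 \<le> real (A w y) * (2 * (f y)\<^sup>2 + 2 * (?m w)\<^sup>2)"
          by (rule mult_left_mono) (use that_ in simp_all)
        then show ?thesis by (simp add: algebra_simps)
      qed
    qed
    also have "\<dots> = 2 * (\<Sum>w\<in>?V. \<Sum>y\<in>?V. real (A w y) * (f y)\<^sup>2) + 2 * (\<Sum>w\<in>?V. \<Sum>y\<in>?V. real (A w y) * (?m w)\<^sup>2)"
      by (simp add: sum.distrib sum_distrib_left)
    also have "(\<Sum>w\<in>?V. \<Sum>y\<in>?V. real (A w y) * (f y)\<^sup>2) = u"
      using DS1[OF G sb_sq[OF f]] nR unfolding u_def ip_def by (simp add: power2_eq_square mult_ac)
    also have "(\<Sum>w\<in>?V. \<Sum>y\<in>?V. real (A w y) * (?m w)\<^sup>2) = u'"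
      using DS2[OF G sb_sq[OF Pop_sb[OF G f]]] nR unfolding u'_def ip_def by (simp add: power2_eq_square mult_ac)
    finally show ?thesis using EE E0 by simp
  qed
  define P where "P = Phi A ?V (\<lambda>y. (f y)\<^sup>2) (\<lambda>w. (?m w)\<^sup>2)"
  have P0: "P \<ge> 0" unfolding P_def by (rule Phi_nonneg)
  have L0: "L \<ge> 0" unfolding L_def using f0 by (intro sum_nonneg) simp
  have fv0: "f v0 \<ge> 0" using f0 by simp
  have s1: "u\<^sup>2 \<le> L\<^sup>2 * P"
  proof -
    have "u\<^sup>2 \<le> (L * f v0)\<^sup>2" by (rule power_mono[OF a u0])
    also have "\<dots> = L\<^sup>2 * (f v0)\<^sup>2" by (simp add: power_mult_distrib)
    also have "\<dots> \<le> L\<^sup>2 * P" using b unfolding P_def by (intro mult_left_mono) simp_all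
    finally show ?thesis .
  qed
  have s2: "u^4 \<le> L^4 * (E * (4 * u))"
  proof -
    have "u^4 = (u\<^sup>2)\<^sup>2" by simp
    also have "\<dots> \<le> (L\<^sup>2 * P)\<^sup>2" by (rule power_mono[OF s1]) simp
    also have "\<dots> = L^4 * P\<^sup>2" by (simp add: power_mult_distrib)
    also have "\<dots> \<le> L^4 * (E * S2)" using c unfolding P_def by (intro mult_left_mono) simp_all
    also have "\<dots> \<le> L^4 * (E * (4 * u))" using d E0 by (intro mult_left_mono) simp_all
    finally show ?thesis .
  qed
  have "u^3 \<le> 4 * L^4 * E"
  proof (cases "u = 0")
    case True then show ?thesis using E0 by simp
  next
    case False
    then have up: "u > 0" using u0 by simp
    have "u * u^3 \<le> u * (4 * L^4 * E)" proof -
      have "u * u^3 = u^4" using power_add[of u 1 3] by simp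
      also have "\<dots> \<le> L^4 * (E * (4 * u))" by (rule s2)
      also have "\<dots> = u * (4 * L^4 * E)" by (simp only: mult_ac)
      finally show ?thesis .
    qed
    then show ?thesis using up by simp
  qed
  then show ?thesis unfolding u_def L_def EE u'_def .
qed



declare walk_prob.simps(2)[simp del]

lemma walk1: assumes G: "inf_graph A" shows "walk_prob A (Suc 0) x x = 0"
proof -
  have "(\<Sum>z\<in>nb A x. real (A x z) * walk_prob A 0 z x) = 0"
    by (rule sum.neutral) (use ig_loop[OF G, of x] in auto)
  then show ?thesis unfolding walk_Suc Pop_def by simp
qed

lemma step_facts:
  fixes x t :: nat
  assumes G: "inf_graph A"
  defines "D \<equiv> real (deg A x)"
  shows "walk_prob A (2 * Suc t) x x \<le> walk_prob A (2 * t) x x"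
    and "(walk_prob A (2 * t) x x)^3 \<le> 4 * D^2 * (walk_prob A (2 * t) x x - walk_prob A (2 * Suc t) x x)"
    and "walk_prob A (2 * t + 1) x x \<le> walk_prob A (2 * t) x x"
proof -
  define R where "R = 2 * t + 3"
  define q where "q k = (\<lambda>y. walk_prob A k y x)" for k
  define r where "r = walk_prob A (2 * t) x x"
  define r' where "r' = walk_prob A (2 * Suc t) x x"
  define s where "s = walk_prob A (2 * t + 1) x x"
  have D0: "D > 0" unfolding D_def by (rule real_deg_pos[OF G])
  have sq: "sb A x (q t) t" unfolding q_def by (rule walk_sb[OF G])
  have f0: "\<forall>y. q t y \<ge> 0" unfolding q_def by (simp add: walk_nonneg)
  have Pq: "Pop A (q t) = q (Suc t)" unfolding q_def by (rule walk_Suc_fun[symmetric])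
  have L: "(\<Sum>y\<in>bl A x R. real (deg A y) * q t y) = D"
    unfolding q_def D_def by (rule L1[OF G]) (simp add: R_def)
  have u: "ip A x R (q t) (q t) = D * r"
  proof -
    have "ip A x R (q t) (q t) = D * walk_prob A (t + t) x x"
      unfolding q_def D_def by (rule R1[OF G]) (simp add: R_def)
    also have "t + t = 2 * t" by simp
    finally show ?thesis unfolding r_def .
  qed
  have u': "ip A x R (q (Suc t)) (q (Suc t)) = D * r'"
  proof -
    have "ip A x R (q (Suc t)) (q (Suc t)) = D * walk_prob A (Suc t + Suc t) x x"
      unfolding q_def D_def by (rule R1[OF G]) (simp add: R_def)
    also have "Suc t + Suc t = 2 * Suc t" by simp
    finally show ?thesis unfolding r'_def .
  qed
  have us: "ip A x R (q t) (q (Suc t)) = D * s"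
  proof -
    have "ip A x R (q t) (q (Suc t)) = D * walk_prob A (t + Suc t) x x"
      unfolding q_def D_def by (rule R1[OF G]) (simp add: R_def)
    also have "t + Suc t = 2 * t + 1" by simp
    finally show ?thesis unfolding s_def .
  qed
  have nash': "(D * r)^3 \<le> 4 * D^4 * (D * r - D * r')"
    using nash[OF G sq _ f0, of R] unfolding Pq L u u' by (simp add: R_def)
  have var: "0 \<le> D * r - D * r'"
  proof -
    have "0 \<le> (\<Sum>w\<in>bl A x R. \<Sum>y\<in>bl A x R. real (A w y) * (q t y - Pop A (q t) w)\<^sup>2)"
      by (intro sum_nonneg) simp
    also have "\<dots> = D * r - D * r'" using variance[OF G sq, of R] unfolding Pq u u' by (simp add: R_def)
    finally show ?thesis .
  qed
  then have rr: "r' \<le> r" using D0 by (simp add: right_diff_distrib[symmetric] zero_le_mult_iff)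
  then show "walk_prob A (2 * Suc t) x x \<le> walk_prob A (2 * t) x x" unfolding r_def r'_def .
  have "D^3 * r^3 \<le> D^3 * (4 * D^2 * (r - r'))"
  proof -
    have "D^3 * r^3 = (D * r)^3" by (simp add: power_mult_distrib)
    also have "\<dots> \<le> 4 * D^4 * (D * r - D * r')" by (rule nash')
    also have "\<dots> = D^3 * (4 * D^2 * (r - r'))"
      by (simp add: algebra_simps power2_eq_square power3_eq_cube power4_eq_xxxx)
    finally show ?thesis .
  qed
  then show "(walk_prob A (2 * t) x x)^3 \<le> 4 * D^2 * (walk_prob A (2 * t) x x - walk_prob A (2 * Suc t) x x)"
    unfolding r_def r'_def using D0 by (simp add: mult_le_cancel_left_pos)
  have "D * s \<le> (D * r + D * r') / 2"
  proof -
    have "D * s = (\<Sum>y\<in>bl A x R. real (deg A y) * q t y * q (Suc t) y)" using us unfolding ip_def by simp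
    also have "\<dots> \<le> (\<Sum>y\<in>bl A x R. (real (deg A y) * q t y * q t y + real (deg A y) * q (Suc t) y * q (Suc t) y) / 2)"
    proof (rule sum_mono)
      fix y
      have d0: "real (deg A y) \<ge> 0" by simp
      have "2 * (q t y * q (Suc t) y) \<le> q t y * q t y + q (Suc t) y * q (Suc t) y"
        using zero_le_power2[of "q t y - q (Suc t) y"] unfolding power2_eq_square by (simp add: algebra_simps)
      then have "real (deg A y) * (2 * (q t y * q (Suc t) y)) \<le> real (deg A y) * (q t y * q t y + q (Suc t) y * q (Suc t) y)"
        by (rule mult_left_mono[OF _ d0])
      then show "real (deg A y) * q t y * q (Suc t) y \<le> (real (deg A y) * q t y * q t y + real (deg A y) * q (Suc t) y * q (Suc t) y) / 2"
        by (simp add: algebra_simps)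
    qed
    also have "\<dots> = (ip A x R (q t) (q t) + ip A x R (q (Suc t)) (q (Suc t))) / 2"
      unfolding ip_def by (simp add: sum.distrib sum_divide_distrib[symmetric])
    finally show ?thesis unfolding u u' .
  qed
  moreover have "D * r' \<le> D * r" using rr D0 by (intro mult_left_mono) simp_all
  then have "(D * r + D * r') / 2 \<le> D * r" by (simp add: field_simps)
  ultimately have "D * s \<le> D * r" by (rule order.trans)
  then show "walk_prob A (2 * t + 1) x x \<le> walk_prob A (2 * t) x x"
    unfolding s_def r_def using D0 by (simp add: mult_le_cancel_left_pos)
qed

lemma decay:
  fixes r :: "nat \<Rightarrow> real" and K :: real
  assumes K: "K > 0" and r0: "\<And>t. r t \<ge> 0" and mono: "\<And>t. r (Suc t) \<le> r t"
    and rec: "\<And>t. (r t)^3 \<le> K * (r t - r (Suc t))"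
  shows "real t * (r t)^2 \<le> K"
proof (induction t)
  case 0 then show ?case using K by simp
next
  case (Suc t)
  show ?case
  proof (cases "r (Suc t) = 0")
    case True then show ?thesis using K by simp
  next
    case False
    define a where "a = (r t)^2"
    define b where "b = (r (Suc t))^2"
    have rp: "r (Suc t) > 0" using False r0[of "Suc t"] by simp
    have rle: "r (Suc t) \<le> r t" by (rule mono)
    have b0: "b > 0" unfolding b_def using rp by simp
    have ba: "b \<le> a" unfolding a_def b_def by (rule power_mono) (use rle rp in simp_all)
    have key: "a * b \<le> K * (a - b)"
    proof -
      have "a * b \<le> a * a" using ba by (intro mult_left_mono) (simp_all add: a_def)
      also have "a * a = (r t)^3 * r t"
      proof -
        have "a * a = (r t)^(2+2)" unfolding a_def by (rule power_add[symmetric])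
        also have "\<dots> = (r t)^(Suc 3)" by simp
        also have "\<dots> = (r t)^3 * r t" by (rule power_Suc2)
        finally show ?thesis .
      qed
      also have "\<dots> \<le> K * (r t - r (Suc t)) * r t" by (rule mult_right_mono[OF rec r0])
      also have "\<dots> \<le> K * (r t - r (Suc t)) * (r t + r (Suc t))"
      proof (rule mult_left_mono)
        show "r t \<le> r t + r (Suc t)" using rp by simp
        show "0 \<le> K * (r t - r (Suc t))" using K rle by simp
      qed
      also have "\<dots> = K * (a - b)" unfolding a_def b_def by (simp add: algebra_simps power2_eq_square)
      finally show ?thesis .
    qed
    have IH: "real t * a \<le> K" using Suc.IH unfolding a_def .
    have "(real (Suc t) * b) * (K + a) \<le> K * (K + a)"
    proof -
      have "(real (Suc t) * b) * (K + a) = real (Suc t) * (b * K + a * b)" by (simp add: algebra_simps)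
      also have "\<dots> \<le> real (Suc t) * (b * K + K * (a - b))" using key by (intro mult_left_mono) simp_all
      also have "\<dots> = real (Suc t) * K * a" by (simp add: algebra_simps)
      also have "\<dots> = K * (real t * a + a)" by (simp add: algebra_simps)
      also have "\<dots> \<le> K * (K + a)" using IH K by (intro mult_left_mono) simp_all
      finally show ?thesis .
    qed
    moreover have "K + a > 0" using K unfolding a_def by (simp add: add_pos_nonneg)
    ultimately have "real (Suc t) * b \<le> K" by (simp add: mult_le_cancel_right_pos)
    then show ?thesis unfolding b_def .
  qed
qed

lemma ret_bound:
  assumes G: "inf_graph A" and k: "k \<ge> 2"
  shows "walk_prob A k x x \<le> 4 * real (deg A x) / sqrt (real k)"
proof -
  define D where "D = real (deg A x)"
  define r where "r t = walk_prob A (2 * t) x x" for t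
  have D0: "D > 0" unfolding D_def by (rule real_deg_pos[OF G])
  have K: "4 * D^2 > 0" using D0 by simp
  have dec: "real t * (r t)^2 \<le> 4 * D^2" for t
  proof (rule decay[OF K])
    show "\<And>t. 0 \<le> r t" unfolding r_def by (rule walk_nonneg)
    show "\<And>t. r (Suc t) \<le> r t" unfolding r_def by (rule step_facts(1)[OF G])
    show "\<And>t. (r t)^3 \<le> 4 * D^2 * (r t - r (Suc t))" unfolding r_def D_def by (rule step_facts(2)[OF G])
  qed
  define t where "t = k div 2"
  have t1: "t \<ge> 1" unfolding t_def using k by simp
  have pk: "walk_prob A k x x \<le> r t"
  proof (cases "even k")
    case True then have "k = 2 * t" unfolding t_def by simp
    then show ?thesis unfolding r_def by simp
  next
    case False then have "k = 2 * t + 1" unfolding t_def by presburger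
    then show ?thesis unfolding r_def using step_facts(3)[OF G, where x=x and t=t] by simp
  qed
  have tpos: "real t > 0" using t1 by simp
  have r0: "r t \<ge> 0" unfolding r_def by (simp add: walk_nonneg)
  have "(r t)^2 \<le> 4 * D^2 / real t" using dec[of t] tpos by (simp add: field_simps)
  then have "sqrt ((r t)^2) \<le> sqrt (4 * D^2 / real t)" by (rule real_sqrt_le_mono)
  then have rt: "r t \<le> 2 * D / sqrt (real t)" using r0 D0 by (simp add: real_sqrt_divide real_sqrt_mult)
  have "real k \<le> 4 * real t" unfolding t_def using k by linarith
  then have "sqrt (real k) \<le> sqrt (4 * real t)" by (rule real_sqrt_le_mono)
  then have sk: "sqrt (real k) \<le> 2 * sqrt (real t)" by (simp add: real_sqrt_mult)
  have skp: "sqrt (real k) > 0" using k by simp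
  have "2 * D / sqrt (real t) \<le> 4 * D / sqrt (real k)"
    using sk skp tpos D0 by (simp add: field_simps)
  then show ?thesis using pk rt unfolding D_def by linarith
qed

lemma powr_32: "real k > 0 \<Longrightarrow> real k powr (-3/2) = 1 / (real k * sqrt (real k))"
proof -
  assume kp: "real k > 0"
  have "real k powr (3/2) = real k powr (1 + 1/2)" by simp
  also have "\<dots> = real k powr 1 * real k powr (1/2)" by (rule powr_add)
  also have "\<dots> = real k * sqrt (real k)" using kp by (simp add: powr_half_sqrt)
  finally have e: "real k powr (3/2) = real k * sqrt (real k)" .
  have "real k powr (-3/2) = real k powr (-(3/2))" by simp
  also have "\<dots> = inverse (real k powr (3/2))" by (rule powr_minus)
  also have "\<dots> = inverse (real k * sqrt (real k))" by (simp only: e)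
  also have "\<dots> = 1 / (real k * sqrt (real k))" by (rule inverse_eq_divide)
  finally show ?thesis .
qed

definition Zc :: real where "Zc = (\<Sum>j. real (Suc j) powr (-3/2))"

lemma summable_Z: "summable (\<lambda>j. real (Suc j) powr (-3/2))"
proof -
  have "summable (\<lambda>n. real n powr (-3/2))" by (subst summable_real_powr_iff) simp
  then show ?thesis by (subst summable_Suc_iff)
qed

lemma term_bound:
  assumes G: "inf_graph A"
  shows "walk_prob A (Suc j) x x / real (Suc j) \<le> 4 * real (deg A x) * real (Suc j) powr (-3/2)"
proof (cases "j = 0")
  case True
  then show ?thesis using walk1[OF G, of x] by simp
next
  case False
  then have k2: "Suc j \<ge> 2" by simp
  have kp: "real (Suc j) > 0" by simp
  have "walk_prob A (Suc j) x x / real (Suc j) \<le> (4 * real (deg A x) / sqrt (real (Suc j))) / real (Suc j)"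
    by (rule divide_right_mono[OF ret_bound[OF G k2, of x]]) simp
  also have "\<dots> = 4 * real (deg A x) * real (Suc j) powr (-3/2)"
    unfolding powr_32[OF kp] by simp
  finally show ?thesis .
qed

lemma series_bound:
  assumes G: "inf_graph A"
  shows "summable (\<lambda>j. ret_prob A (Suc j) x / real (Suc j))"
    and "(\<Sum>j. ret_prob A (Suc j) x / real (Suc j)) \<le> 4 * real (deg A x) * Zc"
    and "(\<Sum>j. ret_prob A (Suc j) x / real (Suc j)) \<ge> 0"
proof -
  let ?a = "\<lambda>j. ret_prob A (Suc j) x / real (Suc j)"
  let ?b = "\<lambda>j. 4 * real (deg A x) * real (Suc j) powr (-3/2)"
  have a0: "\<And>j. ?a j \<ge> 0" unfolding ret_prob_def by (simp add: walk_nonneg)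
  have ab: "\<And>j. ?a j \<le> ?b j" unfolding ret_prob_def by (rule term_bound[OF G])
  have sb: "summable ?b" by (intro summable_mult summable_Z)
  show sa: "summable ?a"
  proof (rule summable_comparison_test'[OF sb, of 0])
    fix n show "norm (?a n) \<le> ?b n" using a0[of n] ab[of n] by (metis abs_of_nonneg real_norm_def)
  qed
  have "(\<Sum>j. ?a j) \<le> (\<Sum>j. ?b j)" by (rule suminf_le[OF ab sa sb])
  also have "\<dots> = 4 * real (deg A x) * Zc" unfolding Zc_def by (rule suminf_mult[OF summable_Z])
  finally show "(\<Sum>j. ?a j) \<le> 4 * real (deg A x) * Zc" .
  show "(\<Sum>j. ?a j) \<ge> 0" by (rule suminf_nonneg[OF sa a0])
qed



lemma meas_row_sum:
  fixes h :: "'b \<Rightarrow> nat \<Rightarrow> real" and Rw :: "'b \<Rightarrow> nat \<Rightarrow> nat"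
  assumes h: "\<And>z. (\<lambda>A. h A z) \<in> borel_measurable N"
    and c: "\<And>z. (\<lambda>A. Rw A z) \<in> measurable N (count_space UNIV)"
  shows "(\<lambda>A. \<Sum>z\<in>{z. Rw A z \<noteq> 0}. h A z) \<in> borel_measurable N"
proof -
  define g where "g n A = (if (\<forall>z\<ge>n. Rw A z = 0) then (\<Sum>z<n. if Rw A z \<noteq> 0 then h A z else 0) else 0)" for n A
  have gm: "g n \<in> borel_measurable N" for n
    unfolding g_def using h c by measurable
  have lim: "(\<lambda>n. g n A) \<longlonglongrightarrow> (\<Sum>z\<in>{z. Rw A z \<noteq> 0}. h A z)" for A
  proof (cases "finite {z. Rw A z \<noteq> 0}")
    case True
    then obtain m where m: "\<forall>z\<in>{z. Rw A z \<noteq> 0}. z \<le> m"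
      using finite_nat_set_iff_bounded_le by blast
    define n0 where "n0 = Suc m"
    have n0: "\<forall>z\<ge>n0. Rw A z = 0" using m unfolding n0_def by force
    have "g n A = (\<Sum>z\<in>{z. Rw A z \<noteq> 0}. h A z)" if "n \<ge> n0" for n
    proof -
      have s: "{z. Rw A z \<noteq> 0} \<subseteq> {..<n}"
      proof
        fix z assume "z \<in> {z. Rw A z \<noteq> 0}"
        then have "\<not> z \<ge> n0" using n0 by auto
        then show "z \<in> {..<n}" using that by simp
      qed
      have "(\<Sum>z<n. if Rw A z \<noteq> 0 then h A z else 0) = (\<Sum>z\<in>{..<n} \<inter> {z. Rw A z \<noteq> 0}. h A z)"
        by (simp add: sum.inter_restrict)
      also have "{..<n} \<inter> {z. Rw A z \<noteq> 0} = {z. Rw A z \<noteq> 0}" using s by blast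
      finally show ?thesis unfolding g_def using n0 that by auto
    qed
    then show ?thesis by (intro tendsto_eventually) (auto simp: eventually_sequentially)
  next
    case False
    have "g n A = 0" for n
    proof -
      have "\<not> (\<forall>z\<ge>n. Rw A z = 0)"
      proof
        assume "\<forall>z\<ge>n. Rw A z = 0"
        then have "{z. Rw A z \<noteq> 0} \<subseteq> {..<n}"
          by (metis (mono_tags, lifting) lessThan_iff mem_Collect_eq not_le subsetI)
        then have "finite {z. Rw A z \<noteq> 0}" by (rule finite_subset) simp
        then show False using False by simp
      qed
      then show ?thesis unfolding g_def by (rule if_not_P)
    qed
    then show ?thesis using False by (simp add: sum.infinite)
  qed
  show ?thesis by (rule borel_measurable_LIMSEQ_real[OF lim gm])
qed

lemma meas_entry: "(\<lambda>G. fst G u v) \<in> measurable graph_space (count_space UNIV)"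
proof -
  have 1: "fst \<in> measurable graph_space (Pi\<^sub>M UNIV (\<lambda>x. Pi\<^sub>M UNIV (\<lambda>y. count_space UNIV)))"
    unfolding graph_space_def by (rule measurable_fst)
  have 2: "(\<lambda>A. A u) \<in> measurable (Pi\<^sub>M UNIV (\<lambda>x. Pi\<^sub>M UNIV (\<lambda>y. count_space UNIV))) (Pi\<^sub>M UNIV (\<lambda>y. count_space UNIV))"
    by (rule measurable_component_singleton) simp
  have 3: "(\<lambda>B. B v) \<in> measurable (Pi\<^sub>M UNIV (\<lambda>y. count_space UNIV)) (count_space UNIV)"
    by (rule measurable_component_singleton) simp
  have "(\<lambda>G. (fst G) u) \<in> measurable graph_space (Pi\<^sub>M UNIV (\<lambda>y. count_space UNIV))"
    by (rule measurable_compose[OF 1 2])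
  then show ?thesis by (rule measurable_compose[OF _ 3])
qed

lemma meas_root: "snd \<in> measurable graph_space (count_space UNIV)"
  unfolding graph_space_def by measurable

lemma meas_deg: "(\<lambda>G. real (deg (fst G) v)) \<in> borel_measurable graph_space"
proof -
  have "(\<lambda>G. \<Sum>z\<in>{z. fst G v z \<noteq> 0}. real (fst G v z)) \<in> borel_measurable graph_space"
  proof (rule meas_row_sum)
    fix z
    have [measurable]: "(\<lambda>G. fst G v z) \<in> measurable graph_space (count_space UNIV)" by (rule meas_entry)
    show "(\<lambda>G. real (fst G v z)) \<in> borel_measurable graph_space" by measurable
    show "(\<lambda>G. fst G v z) \<in> measurable graph_space (count_space UNIV)" by (rule meas_entry)
  qed
  moreover have "(\<lambda>G::(nat \<Rightarrow> nat \<Rightarrow> nat) \<times> nat. real (deg (fst G) v)) = (\<lambda>G. \<Sum>z\<in>{z. fst G v z \<noteq> 0}. real (fst G v z))"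
    unfolding deg_def by simp
  ultimately show ?thesis by metis
qed

lemma meas_walk: "(\<lambda>G. walk_prob (fst G) k y v) \<in> borel_measurable graph_space"
proof (induction k arbitrary: y)
  case 0 show ?case by simp
next
  case (Suc k)
  have "(\<lambda>G. \<Sum>z\<in>{z. fst G y z \<noteq> 0}. real (fst G y z) / real (deg (fst G) y) * walk_prob (fst G) k z v)
        \<in> borel_measurable graph_space"
  proof (rule meas_row_sum)
    fix z
    have [measurable]: "(\<lambda>G. fst G y z) \<in> measurable graph_space (count_space UNIV)" by (rule meas_entry)
    have [measurable]: "(\<lambda>G. real (deg (fst G) y)) \<in> borel_measurable graph_space" by (rule meas_deg)
    have [measurable]: "(\<lambda>G. walk_prob (fst G) k z v) \<in> borel_measurable graph_space" by (rule Suc.IH)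
    show "(\<lambda>G. real (fst G y z) / real (deg (fst G) y) * walk_prob (fst G) k z v) \<in> borel_measurable graph_space"
      by measurable
    show "(\<lambda>G. fst G y z) \<in> measurable graph_space (count_space UNIV)" by (rule meas_entry)
  qed
  then show ?case by (simp add: walk_prob.simps(2))
qed

lemma meas_integrand: "tree_entropy_integrand \<in> borel_measurable graph_space"
proof -
  have d: "(\<lambda>G. real (deg (fst G) (snd G))) \<in> borel_measurable graph_space"
    by (rule measurable_compose_countable'[where f = "\<lambda>i G. real (deg (fst G) i)" and g = snd and I = UNIV])
       (simp_all add: meas_deg meas_root)
  have w: "(\<lambda>G. ret_prob (fst G) (Suc k) (snd G) / real (Suc k)) \<in> borel_measurable graph_space" for k
  proof -
    have "(\<lambda>G. walk_prob (fst G) (Suc k) (snd G) (snd G)) \<in> borel_measurable graph_space"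
      by (rule measurable_compose_countable'[where f = "\<lambda>i G. walk_prob (fst G) (Suc k) i i" and g = snd and I = UNIV])
         (simp_all add: meas_walk meas_root)
    then show ?thesis unfolding ret_prob_def by measurable
  qed
  have s: "(\<lambda>G. \<Sum>k. ret_prob (fst G) (Suc k) (snd G) / real (Suc k)) \<in> borel_measurable graph_space"
    by (rule borel_measurable_suminf) (rule w)
  show ?thesis unfolding tree_entropy_integrand_def[abs_def] using d s by measurable
qed

theorem corollary3p9:
  fixes M :: "((nat \<Rightarrow> nat \<Rightarrow> nat) \<times> nat) measure"
  assumes "prob_space M"
    and "sets M = sets graph_space"
    and "AE G in M. inf_graph (fst G)"
    and "(\<integral>\<^sup>+ G. ennreal (real (deg (fst G) (snd G))) \<partial>M) < \<infinity>"
  shows "(AE G in M. summable (\<lambda>k. ret_prob (fst G) (Suc k) (snd G) / real (Suc k)))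
         \<and> integrable M tree_entropy_integrand"
proof
  show "AE G in M. summable (\<lambda>k. ret_prob (fst G) (Suc k) (snd G) / real (Suc k))"
  proof (rule AE_mp[OF assms(3)], rule AE_I2, rule impI)
    fix G :: "(nat \<Rightarrow> nat \<Rightarrow> nat) \<times> nat" assume "inf_graph (fst G)"
    then show "summable (\<lambda>k. ret_prob (fst G) (Suc k) (snd G) / real (Suc k))" by (rule series_bound(1))
  qed
  have meq: "measurable M borel = measurable graph_space borel"
    by (rule measurable_cong_sets[OF assms(2) refl])
  have dM: "(\<lambda>G. real (deg (fst G) (snd G))) \<in> borel_measurable M"
  proof -
    have "(\<lambda>G. real (deg (fst G) (snd G))) \<in> borel_measurable graph_space"
      by (rule measurable_compose_countable'[where f = "\<lambda>i G. real (deg (fst G) i)" and g = snd and I = UNIV])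
         (simp_all add: meas_deg meas_root)
    then show ?thesis unfolding meq .
  qed
  have fM: "tree_entropy_integrand \<in> borel_measurable M" using meas_integrand unfolding meq .
  have idg: "integrable M (\<lambda>G. real (deg (fst G) (snd G)))"
    by (rule integrableI_nonneg[OF dM]) (use assms(4) in auto)
  have Z0: "Zc \<ge> 0" unfolding Zc_def by (rule suminf_nonneg[OF summable_Z]) simp
  have ib: "integrable M (\<lambda>G. (1 + 4 * Zc) * real (deg (fst G) (snd G)))"
    using idg by (rule integrable_mult_right)
  show "integrable M tree_entropy_integrand"
  proof (rule Bochner_Integration.integrable_bound[OF ib fM])
    show "AE G in M. norm (tree_entropy_integrand G) \<le> norm ((1 + 4 * Zc) * real (deg (fst G) (snd G)))"
    proof (rule AE_mp[OF assms(3)], rule AE_I2, rule impI)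
      fix G :: "(nat \<Rightarrow> nat \<Rightarrow> nat) \<times> nat" assume elim: "inf_graph (fst G)"
      define A where "A = fst G"
      define x where "x = snd G"
      define D where "D = real (deg A x)"
      define S where "S = (\<Sum>k. ret_prob A (Suc k) x / real (Suc k))"
      have G: "inf_graph A" using elim unfolding A_def .
      have D1: "D \<ge> 1" unfolding D_def using deg_pos[OF G, of x] by simp
      have S0: "S \<ge> 0" unfolding S_def by (rule series_bound(3)[OF G])
      have SD: "S \<le> 4 * D * Zc" unfolding S_def D_def by (rule series_bound(2)[OF G])
      have l0: "ln D \<ge> 0" using D1 by simp
      have lD: "ln D \<le> D" using ln_le_minus_one[of D] D1 by simp
      have "norm (tree_entropy_integrand G) = \<bar>ln D - S\<bar>"
        unfolding tree_entropy_integrand_def A_def x_def D_def S_def by simp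
      also have "\<dots> \<le> ln D + S" using l0 S0 by simp
      also have "\<dots> \<le> D + 4 * D * Zc" using lD SD by simp
      also have "\<dots> = norm ((1 + 4 * Zc) * real (deg (fst G) (snd G)))"
        unfolding D_def A_def x_def using Z0 by (simp add: algebra_simps)
      finally show "norm (tree_entropy_integrand G) \<le> norm ((1 + 4 * Zc) * real (deg (fst G) (snd G)))" .
    qed
  qed
qed

end
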